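(* Let $k\ge 1$ be an integer, $w>0$ a real number, and $\alpha=1/(k+1)$. The solution $u(z)$ of the differential equation \[ u''(z) - 2u'(z) + \left(1 - w k z^{k-1}\right)u(z) = 0,\qquad u(0)=-1,\ u'(0)=0, \] is \[ u(z) = z e^z \sum_{m\ge 0} \left(\frac{wk}{(k+1)^2}\right)^m \frac{z^{(k+1)m}}{m!\,(m+\alpha)_m} \;-\; e^z \sum_{m\ge 0} \left(\frac{wk}{(k+1)^2}\right)^m \frac{z^{(k+1)m}}{m!\,(m-\alpha)_m}, \] where $(x)_m = x(x-1)\cdots(x-m+1)$ denotes the falling factorial (with $(x)_0=1$).
   Context: In the paper $w=w(t)=\ell(t)/k!$ for a plane binary tree $t$ with $k$ nodes and $\ell(t)$ increasing labelings; the function $u$ arises from the Riccati substitution $S_t=-u'/u$ for the generating function $S_t$ of plane increasing binary trees avoiding fringe subtree shape $t$. *)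

theory Defs
  imports "HOL-Analysis.Analysis"
begin

definition falling_fact :: "real \<Rightarrow> nat \<Rightarrow> real" where
  "falling_fact x m = (\<Prod>i<m. x - real i)"

definition u_sol :: "nat \<Rightarrow> real \<Rightarrow> real \<Rightarrow> real" where
  "u_sol k w z =
     (let \<alpha> = 1 / real (k + 1); c = w * real k / real (k + 1) ^ 2 in
      z * exp z * (\<Sum>m. c ^ m * z ^ ((k + 1) * m) / (fact m * falling_fact (real m + \<alpha>) m))
      - exp z * (\<Sum>m. c ^ m * z ^ ((k + 1) * m) / (fact m * falling_fact (real m - \<alpha>) m)))"

end

theory Submission
  imports Defs "HOL-Analysis.FPS_Convergence"
begin


definition cf :: "real \<Rightarrow> real \<Rightarrow> nat \<Rightarrow> real" where
  "cf c s m = c ^ m / (fact m * falling_fact (real m + s) m)"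

definition FF :: "real \<Rightarrow> real \<Rightarrow> real fps" where
  "FF c s = Abs_fps (cf c s)"

lemma ff_lower:
  assumes "-1/2 \<le> s"
  shows "falling_fact (real m + s) m \<ge> (1/2) ^ m"
proof -
  have "(\<Prod>i<m. (1/2::real)) \<le> (\<Prod>i<m. real m + s - real i)"
    by (rule prod_mono) (use assms in auto)
  then show ?thesis by (simp add: falling_fact_def)
qed

lemma ff_pos:
  assumes "-1 < s"
  shows "falling_fact (real m + s) m > 0"
  unfolding falling_fact_def by (rule prod_pos) (use assms in auto)

lemma ff_Suc:
  "falling_fact (real (Suc j) + s) (Suc j) = (real j + 1 + s) * falling_fact (real j + s) j"
  unfolding falling_fact_def
  by (subst prod.lessThan_Suc_shift) (simp add: algebra_simps)

lemma cf_rec: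
  assumes "-1 < s"
  shows "(real j + 1) * (real j + 1 + s) * cf c s (Suc j) = c * cf c s j"
proof -
  have p: "falling_fact (real j + s) j > 0" using ff_pos[OF assms] by simp
  have q: "real j + 1 + s > 0" using assms by simp
  have n: "real j + 1 > 0" by simp
  have f: "fact j > (0::real)" by simp
  have gen: "\<And>n1 qq F fj. n1 > 0 \<Longrightarrow> qq > 0 \<Longrightarrow> F > 0 \<Longrightarrow> fj > 0 \<Longrightarrow>
     n1 * qq * (c * c ^ j / ((n1 * fj) * (qq * F))) = c * (c ^ j / (fj * F))"
    by (simp add: field_simps)
  have "fact (Suc j) = (real j + 1) * fact j" by (simp add: fact_Suc)
  then show ?thesis unfolding cf_def ff_Suc
    using gen[OF n q p f] by (simp add: add.commute)
qed

lemma cf_bound: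
  assumes "c \<ge> 0" "-1/2 \<le> s"
  shows "\<bar>cf c s m\<bar> \<le> (2*c) ^ m / fact m"
proof -
  have l: "falling_fact (real m + s) m \<ge> (1/2) ^ m" by (rule ff_lower[OF assms(2)])
  have p: "(1/2::real) ^ m > 0" by simp
  have fp: "falling_fact (real m + s) m > 0" using l p by linarith
  have "\<bar>cf c s m\<bar> = c ^ m / (fact m * falling_fact (real m + s) m)"
    unfolding cf_def using fp assms(1) by (simp add: abs_mult)
  also have "\<dots> \<le> c ^ m / (fact m * (1/2) ^ m)"
    apply (rule divide_left_mono)
      apply (simp add: l mult_left_mono)
     apply (simp add: assms)
    using fp by simp
  also have "\<dots> = (2*c) ^ m / fact m" by (simp add: power_mult_distrib field_simps)
  finally show ?thesis .
qed

lemma FF_radius: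
  assumes "c \<ge> 0" "-1/2 \<le> s"
  shows "fps_conv_radius (FF c s) = \<infinity>"
proof -
  have "conv_radius (cf c s) \<ge> \<infinity>"
  proof (rule conv_radius_geI_ex')
    fix r :: real assume r: "0 < r"
    have "summable (\<lambda>n. inverse (fact n) * (2*c*r)^n)" by (rule summable_exp)
    then show "summable (\<lambda>n. cf c s n * of_real r ^ n)"
    proof (rule summable_comparison_test[rotated])
      show "\<exists>N. \<forall>n\<ge>N. norm (cf c s n * of_real r ^ n) \<le> inverse (fact n) * (2*c*r)^n"
      proof (intro exI allI impI)
        fix n :: nat
        have "norm (cf c s n * of_real r ^ n) = \<bar>cf c s n\<bar> * r ^ n" using r by (simp add: abs_mult)
        also have "\<dots> \<le> (2*c) ^ n / fact n * r ^ n"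
          by (rule mult_right_mono[OF cf_bound[OF assms]]) (use r in simp)
        also have "\<dots> = inverse (fact n) * (2*c*r)^n" by (simp add: power_mult_distrib field_simps)
        finally show "norm (cf c s n * of_real r ^ n) \<le> inverse (fact n) * (2*c*r)^n" .
      qed
    qed
  qed
  then show ?thesis unfolding fps_conv_radius_def FF_def by simp
qed

lemma rad_mult_inf:
  fixes f g :: "real fps"
  assumes "fps_conv_radius f = \<infinity>" "fps_conv_radius g = \<infinity>"
  shows "fps_conv_radius (f * g) = \<infinity>"
  using fps_conv_radius_mult[of f g] assms by simp

lemma rad_add_inf:
  fixes f g :: "real fps"
  assumes "fps_conv_radius f = \<infinity>" "fps_conv_radius g = \<infinity>"
  shows "fps_conv_radius (f + g) = \<infinity>"
  using fps_conv_radius_add[of f g] assms by simp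

lemma FF_ode:
  assumes "c \<ge> 0" "-1/2 \<le> s"
  shows "t * eval_fps (fps_deriv (fps_deriv (FF c s))) t + (1 + s) * eval_fps (fps_deriv (FF c s)) t
         = c * eval_fps (FF c s) t"
proof -
  have R: "fps_conv_radius (FF c s) = \<infinity>" by (rule FF_radius[OF assms])
  have R1: "fps_conv_radius (fps_deriv (FF c s)) = \<infinity>"
    using fps_conv_radius_deriv[of "FF c s"] R by simp
  have R2: "fps_conv_radius (fps_deriv (fps_deriv (FF c s))) = \<infinity>"
    using fps_conv_radius_deriv[of "fps_deriv (FF c s)"] R1 by simp
  have s1: "-1 < s" using assms by simp
  have E: "fps_X * fps_deriv (fps_deriv (FF c s)) + fps_const (1 + s) * fps_deriv (FF c s)
           = fps_const c * FF c s"
  proof (rule fps_ext)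
    fix n
    have "real n * (real n + 1) * cf c s (Suc n) + (1 + s) * (real n + 1) * cf c s (Suc n)
          = (real n + 1) * (real n + 1 + s) * cf c s (Suc n)" by (simp add: algebra_simps)
    also have "\<dots> = c * cf c s n" by (rule cf_rec[OF s1])
    finally have *: "real n * (real n + 1) * cf c s (Suc n) + (1 + s) * (real n + 1) * cf c s (Suc n)
          = c * cf c s n" .
    show "fps_nth (fps_X * fps_deriv (fps_deriv (FF c s)) + fps_const (1 + s) * fps_deriv (FF c s)) n
           = fps_nth (fps_const c * FF c s) n"
      using * by (cases n) (simp_all add: FF_def algebra_simps)
  qed
  have "eval_fps (fps_X * fps_deriv (fps_deriv (FF c s)) + fps_const (1 + s) * fps_deriv (FF c s)) t
        = t * eval_fps (fps_deriv (fps_deriv (FF c s))) t + (1 + s) * eval_fps (fps_deriv (FF c s)) t"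
    by (subst eval_fps_add) (simp_all add: rad_mult_inf eval_fps_mult R1 R2)
  also note E
  also have "eval_fps (fps_const c * FF c s) t = c * eval_fps (FF c s) t"
    by (simp add: eval_fps_mult R)
  finally show ?thesis by linarith
qed



lemma ode_unique:
  fixes y y' y'' p :: "real \<Rightarrow> real"
  assumes d1: "\<forall>z. (y has_real_derivative y' z) (at z)"
    and d2: "\<forall>z. (y' has_real_derivative y'' z) (at z)"
    and eq: "\<forall>z. y'' z - 2 * y' z + (1 - p z) * y z = 0"
    and i0: "y 0 = 0" and i1: "y' 0 = 0"
    and bnd: "\<forall>R. \<exists>M\<ge>0. \<forall>z. \<bar>z\<bar> \<le> R \<longrightarrow> \<bar>p z\<bar> \<le> M"
  shows "y x = 0"
proof -
  obtain M where M0: "M \<ge> 0" and M: "\<And>z. \<bar>z\<bar> \<le> \<bar>x\<bar> \<Longrightarrow> \<bar>p z\<bar> \<le> M"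
    using bnd by blast
  define L where "L = 6 + M"
  define E where "E z = (y z)^2 + (y' z)^2" for z
  define E' where "E' z = 2 * y z * y' z + 2 * y' z * y'' z" for z
  have dE: "(E has_real_derivative E' z) (at z)" for z
    unfolding E_def E'_def
    by (rule derivative_eq_intros refl d1[rule_format] d2[rule_format])+ simp
  have Enn: "E z \<ge> 0" for z unfolding E_def by simp
  have E0: "E 0 = 0" unfolding E_def using i0 i1 by simp
  have key: "\<bar>E' z\<bar> \<le> L * E z" if z: "\<bar>z\<bar> \<le> \<bar>x\<bar>" for z
  proof -
    let ?a = "y z" and ?b = "y' z" and ?q = "1 - p z"
    have y2: "y'' z = 2 * ?b - ?q * ?a" using eq[rule_format, of z] by linarith
    have E'z: "E' z = 2 * ?a * ?b + 4 * ?b^2 - 2 * ?q * ?a * ?b"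
      unfolding E'_def y2 by (simp add: algebra_simps power2_eq_square)
    have ab: "\<bar>2 * ?a * ?b\<bar> \<le> E z"
    proof -
      have "0 \<le> (\<bar>?a\<bar> - \<bar>?b\<bar>)^2" by simp
      then show ?thesis unfolding E_def
        by (simp add: power2_eq_square abs_mult algebra_simps)
    qed
    have q: "\<bar>?q\<bar> \<le> 1 + M" using M[OF z] by linarith
    have qab: "\<bar>2 * ?q * ?a * ?b\<bar> \<le> (1 + M) * E z"
    proof -
      have "\<bar>2 * ?q * ?a * ?b\<bar> = \<bar>?q\<bar> * \<bar>2 * ?a * ?b\<bar>"
        by (metis abs_mult mult.assoc mult.left_commute)
      also have "\<dots> \<le> (1 + M) * E z"
        by (rule mult_mono[OF q ab]) (use M0 in auto)
      finally show ?thesis .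
    qed
    have b2: "4 * ?b^2 \<le> 4 * E z" unfolding E_def by simp
    have E'z2: "E' z = 2 * (?a * ?b) + 4 * ?b^2 - 2 * (?q * (?a * ?b))"
      unfolding E'z by (simp add: algebra_simps)
    have ab2: "\<bar>2 * (?a * ?b)\<bar> \<le> E z" using ab by (simp add: mult.assoc)
    have qab2: "\<bar>2 * (?q * (?a * ?b))\<bar> \<le> (1 + M) * E z" using qab by (simp only: mult.assoc)
    have ME: "(1 + M) * E z = E z + M * E z" by (simp add: algebra_simps)
    have "0 \<le> ?b^2" by simp
    then show ?thesis unfolding E'z2 L_def
      using ab2 qab2 b2 Enn[of z] ME by (simp only: abs_le_iff distrib_right) linarith
  qed
  have Ex: "E x \<le> 0"
  proof (cases "x \<ge> 0")
    case True
    define g where "g z = E z * exp (- L * z)" for z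
    have "g 0 \<ge> g x"
    proof (rule DERIV_nonpos_imp_nonincreasing[OF True])
      fix t assume t: "0 \<le> t" "t \<le> x"
      have "(g has_real_derivative E' t * exp (- L * t) + E t * (exp (- L * t) * (- L))) (at t)"
        unfolding g_def by (rule derivative_eq_intros refl dE)+ simp
      moreover have "E' t * exp (- L * t) + E t * (exp (- L * t) * (- L)) \<le> 0"
      proof -
        have "E' t \<le> L * E t" using key[of t] t by simp
        then have "(E' t - L * E t) * exp (- L * t) \<le> 0"
          by (simp add: mult_nonpos_nonneg)
        then show ?thesis by (simp add: algebra_simps)
      qed
      ultimately show "\<exists>y. DERIV g t :> y \<and> y \<le> 0" by blast
    qed
    then show ?thesis unfolding g_def using E0 by (simp add: zero_le_mult_iff mult_le_0_iff)
  next
    case False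
    then have F: "x \<le> 0" by simp
    define g where "g z = E z * exp (L * z)" for z
    have "g x \<le> g 0"
    proof (rule DERIV_nonneg_imp_nondecreasing[OF F])
      fix t assume t: "x \<le> t" "t \<le> 0"
      have "(g has_real_derivative E' t * exp (L * t) + E t * (exp (L * t) * L)) (at t)"
        unfolding g_def by (rule derivative_eq_intros refl dE)+ simp
      moreover have "E' t * exp (L * t) + E t * (exp (L * t) * L) \<ge> 0"
      proof -
        have "- E' t \<le> L * E t" using key[of t] t by simp
        then have "(E' t + L * E t) * exp (L * t) \<ge> 0"
          by simp
        then show ?thesis by (simp add: algebra_simps)
      qed
      ultimately show "\<exists>y. DERIV g t :> y \<and> y \<ge> 0" by blast
    qed
    then show ?thesis unfolding g_def using E0 by (simp add: mult_le_0_iff)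
  qed
  then have "(y x)^2 \<le> 0" unfolding E_def by (smt (verit) zero_le_power2)
  then show ?thesis by simp
qed



lemma rad_deriv_inf:
  fixes F :: "real fps"
  assumes "fps_conv_radius F = \<infinity>"
  shows "fps_conv_radius (fps_deriv F) = \<infinity>"
  using fps_conv_radius_deriv[of F] assms by simp

lemma eval_chain:
  fixes F :: "real fps"
  assumes "fps_conv_radius F = \<infinity>" "(g has_real_derivative g') (at z)"
  shows "((\<lambda>z. eval_fps F (g z)) has_real_derivative eval_fps (fps_deriv F) (g z) * g') (at z)"
proof -
  have "(eval_fps F has_real_derivative eval_fps (fps_deriv F) (g z)) (at (g z))"
    by (rule has_field_derivative_eval_fps) (simp add: assms(1))
  then show ?thesis using DERIV_chain2 assms(2) by blast
qed

lemma main_alg: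
  fixes z w K Aa Aa1 Aa2 Ab Ab1 Ab2 :: real and j :: nat
  assumes K: "K = real j + 1"
    and o1: "(K+1)^2 * (z^j*z*z) * Aa2 + (K+1)*(K+2)*Aa1 = w*K*Aa"
    and o2: "(K+1)^2 * (z^j*z*z) * Ab2 + K*(K+1)*Ab1 = w*K*Ab"
  shows "Aa1 * ((K+1) * (z^j*z)) + (K+1) * ((K+1) * (z^j*z) * Aa1 + (z^j*z*z) * (Aa2 * ((K+1) * (z^j*z))))
         - (K+1) * (K * z^j * Ab1 + (z^j*z) * (Ab2 * ((K+1) * (z^j*z))))
         = w * K * z^j * (z * Aa - Ab)"
proof -
  have "Aa1 * ((K+1) * (z^j*z)) + (K+1) * ((K+1) * (z^j*z) * Aa1 + (z^j*z*z) * (Aa2 * ((K+1) * (z^j*z))))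
         - (K+1) * (K * z^j * Ab1 + (z^j*z) * (Ab2 * ((K+1) * (z^j*z))))
        = (z^j*z) * ((K+1)^2 * (z^j*z*z) * Aa2 + (K+1)*(K+2)*Aa1)
          - z^j * ((K+1)^2 * (z^j*z*z) * Ab2 + K*(K+1)*Ab1)"
    by (simp add: algebra_simps power2_eq_square)
  also have "\<dots> = w * K * z^j * (z * Aa - Ab)" unfolding o1 o2 by (simp add: algebra_simps)
  finally show ?thesis .
qed

lemma eval_chain_eq:
  fixes F :: "real fps"
  assumes "fps_conv_radius F = \<infinity>" "(g has_real_derivative g') (at z)"
    and "D = eval_fps (fps_deriv F) (g z) * g'"
  shows "((\<lambda>z. eval_fps F (g z)) has_real_derivative D) (at z)"
  using eval_chain[OF assms(1,2)] assms(3) by simp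

lemma usol_ode:
  assumes kj: "k = Suc j" and w: "w > 0"
  shows "\<exists>u' u'' :: real \<Rightarrow> real.
              (\<forall>z. (u_sol k w has_real_derivative u' z) (at z)) \<and>
              (\<forall>z. (u' has_real_derivative u'' z) (at z)) \<and>
              (\<forall>z. u'' z - 2 * u' z + (1 - w * real k * z ^ (k - 1)) * u_sol k w z = 0) \<and>
              u_sol k w 0 = -1 \<and> u' 0 = 0"
proof -
  define K where "K = real j + 1"
  define \<alpha> where "\<alpha> = 1 / (K + 1)"
  define c where "c = w * K / (K + 1)^2"
  define Fa where "Fa = FF c \<alpha>"
  define Fb where "Fb = FF c (-\<alpha>)"
  have K1: "K \<ge> 1" unfolding K_def by simp
  have c0: "c \<ge> 0" unfolding c_def using w K1 by simp
  have a1: "-1/2 \<le> \<alpha>"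
  proof -
    have "1/(K+1) > 0" using K1 by simp
    then show ?thesis unfolding \<alpha>_def by linarith
  qed
  have a2: "-1/2 \<le> -\<alpha>" unfolding \<alpha>_def using K1 by (simp add: field_simps)
  have Ra: "fps_conv_radius Fa = \<infinity>" unfolding Fa_def by (rule FF_radius[OF c0 a1])
  have Rb: "fps_conv_radius Fb = \<infinity>" unfolding Fb_def by (rule FF_radius[OF c0 a2])
  have Ra1: "fps_conv_radius (fps_deriv Fa) = \<infinity>" by (rule rad_deriv_inf[OF Ra])
  have Rb1: "fps_conv_radius (fps_deriv Fb) = \<infinity>" by (rule rad_deriv_inf[OF Rb])
  have ode_a: "(K+1)^2 * t * eval_fps (fps_deriv (fps_deriv Fa)) t + (K+1)*(K+2) * eval_fps (fps_deriv Fa) t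
      = w * K * eval_fps Fa t" for t
  proof -
    have e: "t * eval_fps (fps_deriv (fps_deriv Fa)) t + (1 + \<alpha>) * eval_fps (fps_deriv Fa) t
         = c * eval_fps Fa t" unfolding Fa_def by (rule FF_ode[OF c0 a1])
    have "(K+1)^2 * (t * eval_fps (fps_deriv (fps_deriv Fa)) t + (1 + \<alpha>) * eval_fps (fps_deriv Fa) t)
        = (K+1)^2 * (c * eval_fps Fa t)" unfolding e ..
    moreover have h1: "(K+1)^2 * (1 + \<alpha>) = (K+1)*(K+2)" unfolding \<alpha>_def using K1
      by (simp add: field_simps power2_eq_square)
    moreover have h2: "(K+1)^2 * c = w * K" unfolding c_def using K1 by simp
    ultimately show ?thesis by (simp only: distrib_left mult.assoc[symmetric])
  qed
  have ode_b: "(K+1)^2 * t * eval_fps (fps_deriv (fps_deriv Fb)) t + K*(K+1) * eval_fps (fps_deriv Fb) t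
      = w * K * eval_fps Fb t" for t
  proof -
    have e: "t * eval_fps (fps_deriv (fps_deriv Fb)) t + (1 + - \<alpha>) * eval_fps (fps_deriv Fb) t
         = c * eval_fps Fb t" unfolding Fb_def by (rule FF_ode[OF c0 a2])
    have "(K+1)^2 * (t * eval_fps (fps_deriv (fps_deriv Fb)) t + (1 + - \<alpha>) * eval_fps (fps_deriv Fb) t)
        = (K+1)^2 * (c * eval_fps Fb t)" unfolding e ..
    moreover have h1: "(K+1)^2 * (1 + - \<alpha>) = K*(K+1)" unfolding \<alpha>_def using K1
      by (simp add: field_simps power2_eq_square)
    moreover have h2: "(K+1)^2 * c = w * K" unfolding c_def using K1 by simp
    ultimately show ?thesis by (simp only: distrib_left mult.assoc[symmetric])
  qed
  define v where "v z = z * eval_fps Fa (z ^ Suc (Suc j)) - eval_fps Fb (z ^ Suc (Suc j))" for z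
  define V1 where "V1 z = eval_fps Fa (z ^ Suc (Suc j)) + (K+1) * z ^ Suc (Suc j) * eval_fps (fps_deriv Fa) (z ^ Suc (Suc j))
     - (K+1) * z ^ Suc j * eval_fps (fps_deriv Fb) (z ^ Suc (Suc j))" for z
  define V2 where "V2 z = w * K * z^j * v z" for z
  have U: "u_sol k w = (\<lambda>z. exp z * v z)"
  proof
    fix z
    have pw: "(z::real) ^ ((Suc j + 1) * m) = (z ^ Suc (Suc j)) ^ m" for m
      by (metis power_mult Suc_eq_plus1)
    have sa: "(\<Sum>m. c ^ m * z ^ ((k + 1) * m) / (fact m * falling_fact (real m + 1 / real (k + 1)) m))
        = eval_fps Fa (z ^ Suc (Suc j))"
      unfolding eval_fps_def Fa_def FF_def cf_def \<alpha>_def K_def kj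
      apply (simp only: pw)
      by (simp add: add_ac)
    have sb: "(\<Sum>m. c ^ m * z ^ ((k + 1) * m) / (fact m * falling_fact (real m - 1 / real (k + 1)) m))
        = eval_fps Fb (z ^ Suc (Suc j))"
      unfolding eval_fps_def Fb_def FF_def cf_def \<alpha>_def K_def kj
      apply (simp only: pw)
      by (simp add: add_ac)
    have cc: "w * real k / real (k + 1) ^ 2 = c" unfolding c_def K_def kj by (simp add: add_ac)
    show "u_sol k w z = exp z * v z"
      unfolding u_sol_def Let_def cc sa sb v_def by (simp add: algebra_simps)
  qed
  have dv: "(v has_real_derivative V1 z) (at z)" for z
    unfolding v_def[abs_def]
    by (rule eval_chain_eq[OF Ra] eval_chain_eq[OF Rb] derivative_eq_intros refl)+
       (simp add: V1_def K_def algebra_simps)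
  have dV1: "(V1 has_real_derivative V2 z) (at z)" for z
  proof -
    have D: "(V1 has_real_derivative
      eval_fps (fps_deriv Fa) (z ^ Suc (Suc j)) * ((K+1) * (z^j*z)) + (K+1) * ((K+1) * (z^j*z) * eval_fps (fps_deriv Fa) (z ^ Suc (Suc j)) + (z^j*z*z) * (eval_fps (fps_deriv (fps_deriv Fa)) (z ^ Suc (Suc j)) * ((K+1) * (z^j*z))))
         - (K+1) * (K * z^j * eval_fps (fps_deriv Fb) (z ^ Suc (Suc j)) + (z^j*z) * (eval_fps (fps_deriv (fps_deriv Fb)) (z ^ Suc (Suc j)) * ((K+1) * (z^j*z))))) (at z)"
      unfolding V1_def[abs_def]
      by (rule eval_chain_eq[OF Ra] eval_chain_eq[OF Rb] eval_chain_eq[OF Ra1] eval_chain_eq[OF Rb1]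
          derivative_eq_intros refl)+
         (simp add: K_def algebra_simps)
    have tz: "z ^ Suc (Suc j) = z^j*z*z" by (simp add: mult_ac)
    have oa: "(K+1)^2 * (z^j*z*z) * eval_fps (fps_deriv (fps_deriv Fa)) (z ^ Suc (Suc j))
       + (K+1)*(K+2) * eval_fps (fps_deriv Fa) (z ^ Suc (Suc j)) = w * K * eval_fps Fa (z ^ Suc (Suc j))"
      using ode_a[of "z ^ Suc (Suc j)"] by (simp only: tz)
    have ob: "(K+1)^2 * (z^j*z*z) * eval_fps (fps_deriv (fps_deriv Fb)) (z ^ Suc (Suc j))
       + K*(K+1) * eval_fps (fps_deriv Fb) (z ^ Suc (Suc j)) = w * K * eval_fps Fb (z ^ Suc (Suc j))"
      using ode_b[of "z ^ Suc (Suc j)"] by (simp only: tz)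
    note MA = main_alg[OF K_def oa ob]
    show ?thesis unfolding V2_def v_def by (rule DERIV_cong[OF D MA])
  qed
  show ?thesis
  proof (intro exI conjI allI)
    fix z
    show "(u_sol k w has_real_derivative exp z * v z + exp z * V1 z) (at z)"
      unfolding U by (rule derivative_eq_intros refl dv)+ simp
    show "((\<lambda>z. exp z * v z + exp z * V1 z) has_real_derivative
           exp z * v z + exp z * V1 z + (exp z * V1 z + exp z * V2 z)) (at z)"
      by (rule derivative_eq_intros refl dv dV1)+ simp
    show "exp z * v z + exp z * V1 z + (exp z * V1 z + exp z * V2 z) - 2 * (exp z * v z + exp z * V1 z)
          + (1 - w * real k * z ^ (k - 1)) * u_sol k w z = 0"
    proof -
      have Uz: "u_sol k w z = exp z * v z" using U by simp
      show ?thesis unfolding Uz unfolding V2_def K_def kj by (simp add: algebra_simps)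
    qed
  next
    show "u_sol k w 0 = -1" unfolding U v_def
      by (simp add: eval_fps_at_0 Fb_def FF_def cf_def falling_fact_def)
    show "exp 0 * v 0 + exp 0 * V1 0 = 0" unfolding v_def V1_def
      by (simp add: eval_fps_at_0 Fa_def Fb_def FF_def cf_def falling_fact_def)
  qed
qed


lemma p_bound:
  fixes w :: real and k :: nat
  assumes "w > 0"
  shows "\<forall>R. \<exists>M\<ge>0. \<forall>z::real. \<bar>z\<bar> \<le> R \<longrightarrow> \<bar>w * real k * z ^ (k - 1)\<bar> \<le> M"
proof
  fix R :: real
  show "\<exists>M\<ge>0. \<forall>z::real. \<bar>z\<bar> \<le> R \<longrightarrow> \<bar>w * real k * z ^ (k - 1)\<bar> \<le> M"
  proof (intro exI conjI allI impI)
    show "0 \<le> w * real k * \<bar>R\<bar> ^ (k - 1)" using assms by simp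
    fix z :: real assume z: "\<bar>z\<bar> \<le> R"
    have "\<bar>z\<bar> ^ (k - 1) \<le> \<bar>R\<bar> ^ (k - 1)"
      by (rule power_mono) (use z in auto)
    then have "w * real k * \<bar>z\<bar> ^ (k - 1) \<le> w * real k * \<bar>R\<bar> ^ (k - 1)"
      by (rule mult_left_mono) (use assms in simp)
    then show "\<bar>w * real k * z ^ (k - 1)\<bar> \<le> w * real k * \<bar>R\<bar> ^ (k - 1)"
      using assms by (simp add: abs_mult power_abs)
  qed
qed

theorem lemma3p2:
  fixes k :: nat and w :: real
  assumes "k \<ge> 1" and "w > 0"
  shows "\<forall>u :: real \<Rightarrow> real.
           (\<exists>u' u'' :: real \<Rightarrow> real.
              (\<forall>z. (u has_real_derivative u' z) (at z)) \<and>
              (\<forall>z. (u' has_real_derivative u'' z) (at z)) \<and>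
              (\<forall>z. u'' z - 2 * u' z + (1 - w * real k * z ^ (k - 1)) * u z = 0) \<and>
              u 0 = -1 \<and> u' 0 = 0)
           \<longleftrightarrow> u = u_sol k w"
proof -
  obtain j where kj: "k = Suc j" using assms(1) by (cases k) auto
  obtain s1 s2 :: "real \<Rightarrow> real" where
    S1: "\<forall>z. (u_sol k w has_real_derivative s1 z) (at z)" and
    S2: "\<forall>z. (s1 has_real_derivative s2 z) (at z)" and
    S3: "\<forall>z. s2 z - 2 * s1 z + (1 - w * real k * z ^ (k - 1)) * u_sol k w z = 0" and
    S4: "u_sol k w 0 = -1" and S5: "s1 0 = 0"
    using usol_ode[OF kj assms(2)] by blast
  show ?thesis
  proof (intro allI iffI)
    fix u :: "real \<Rightarrow> real"
    assume "\<exists>u' u'' :: real \<Rightarrow> real.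
              (\<forall>z. (u has_real_derivative u' z) (at z)) \<and>
              (\<forall>z. (u' has_real_derivative u'' z) (at z)) \<and>
              (\<forall>z. u'' z - 2 * u' z + (1 - w * real k * z ^ (k - 1)) * u z = 0) \<and>
              u 0 = -1 \<and> u' 0 = 0"
    then obtain u' u'' :: "real \<Rightarrow> real" where
      H1: "\<forall>z. (u has_real_derivative u' z) (at z)" and
      H2: "\<forall>z. (u' has_real_derivative u'' z) (at z)" and
      H3: "\<forall>z. u'' z - 2 * u' z + (1 - w * real k * z ^ (k - 1)) * u z = 0" and
      H4: "u 0 = -1" and H5: "u' 0 = 0" by blast
    have "u x - u_sol k w x = 0" for x
    proof (rule ode_unique[where y="\<lambda>z. u z - u_sol k w z" and y'="\<lambda>z. u' z - s1 z"
          and y''="\<lambda>z. u'' z - s2 z" and p="\<lambda>z. w * real k * z ^ (k - 1)"])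
      show "\<forall>z. ((\<lambda>z. u z - u_sol k w z) has_real_derivative u' z - s1 z) (at z)"
        using H1 S1 by (auto intro: DERIV_diff)
      show "\<forall>z. ((\<lambda>z. u' z - s1 z) has_real_derivative u'' z - s2 z) (at z)"
        using H2 S2 by (auto intro: DERIV_diff)
      show "\<forall>z. u'' z - s2 z - 2 * (u' z - s1 z) + (1 - w * real k * z ^ (k - 1)) * (u z - u_sol k w z) = 0"
      proof
        fix z
        have "u'' z - s2 z - 2 * (u' z - s1 z) + (1 - w * real k * z ^ (k - 1)) * (u z - u_sol k w z)
          = (u'' z - 2 * u' z + (1 - w * real k * z ^ (k - 1)) * u z)
            - (s2 z - 2 * s1 z + (1 - w * real k * z ^ (k - 1)) * u_sol k w z)"
          by (simp add: algebra_simps)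
        then show "u'' z - s2 z - 2 * (u' z - s1 z) + (1 - w * real k * z ^ (k - 1)) * (u z - u_sol k w z) = 0"
          using H3[rule_format, of z] S3[rule_format, of z] by linarith
      qed
      show "u 0 - u_sol k w 0 = 0" using H4 S4 by simp
      show "u' 0 - s1 0 = 0" using H5 S5 by simp
      show "\<forall>R. \<exists>M\<ge>0. \<forall>z. \<bar>z\<bar> \<le> R \<longrightarrow> \<bar>w * real k * z ^ (k - 1)\<bar> \<le> M"
        by (rule p_bound[OF assms(2)])
    qed
    then show "u = u_sol k w" by auto
  next
    fix u :: "real \<Rightarrow> real"
    assume "u = u_sol k w"
    then show "\<exists>u' u'' :: real \<Rightarrow> real.
              (\<forall>z. (u has_real_derivative u' z) (at z)) \<and>
              (\<forall>z. (u' has_real_derivative u'' z) (at z)) \<and>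
              (\<forall>z. u'' z - 2 * u' z + (1 - w * real k * z ^ (k - 1)) * u z = 0) \<and>
              u 0 = -1 \<and> u' 0 = 0"
      using S1 S2 S3 S4 S5 by blast
  qed
qed

end
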